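(* Let $k\ge 3$, $1\le s\le k-1$, $m\ge 1$, $n=m(k-s)\ge 2k-s$, and let $G$ be the $k$-uniform $s$-cycle with vertex set $\mathbb{Z}_n$ and edges $e_j=\{1+j(k-s),\ldots,s+(j+1)(k-s)\}$ (labels modulo $n$), $j=0,\ldots,m-1$. Then $G$ is regular if and only if $k=q(k-s)$ for some positive integer $q$. In this case every vertex of $G$ has degree $q$.
   Context: A $k$-uniform $s$-cycle with $m$ edges has vertex set $\mathbb{Z}_n$, $n=m(k-s)$ (vertex $n+i$ identified with $i$), and edge set $\{e_0,\ldots,e_{m-1}\}$ with $e_j=\{j(k-s)+1,\ldots,j(k-s)+k\}$; throughout the paper it is assumed that $n\ge 2k-s$. The degree of a vertex is the number of edges containing it; the hypergraph is regular if all degrees are equal. *)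

theory Defs
  imports Main
begin

text \<open>k-uniform s-cycle with m edges on vertex set Z_n, n = m(k-s),
  vertices represented by 0..n-1 (labels taken mod n).
  Edge e_j = {j(k-s)+1, ..., j(k-s)+k} mod n.\<close>

definition scycle_edge :: "nat \<Rightarrow> nat \<Rightarrow> nat \<Rightarrow> nat \<Rightarrow> nat set" where
  "scycle_edge k s m j = (\<lambda>i. (j * (k - s) + i) mod (m * (k - s))) ` {1..k}"

definition scycle_edges :: "nat \<Rightarrow> nat \<Rightarrow> nat \<Rightarrow> nat set set" where
  "scycle_edges k s m = scycle_edge k s m ` {..<m}"

definition scycle_vertices :: "nat \<Rightarrow> nat \<Rightarrow> nat \<Rightarrow> nat set" where
  "scycle_vertices k s m = {..<m * (k - s)}"

definition scycle_degree :: "nat \<Rightarrow> nat \<Rightarrow> nat \<Rightarrow> nat \<Rightarrow> nat" where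
  "scycle_degree k s m v = card {e \<in> scycle_edges k s m. v \<in> e}"

definition scycle_regular :: "nat \<Rightarrow> nat \<Rightarrow> nat \<Rightarrow> bool" where
  "scycle_regular k s m \<longleftrightarrow>
     (\<forall>u \<in> scycle_vertices k s m. \<forall>v \<in> scycle_vertices k s m.
        scycle_degree k s m u = scycle_degree k s m v)"

end

theory Submission
  imports Defs
begin

lemma mem_edge:
  assumes "0 < m * (k - s)"
  shows "x \<in> scycle_edge k s m j \<longleftrightarrow> x < m*(k-s) \<and>
     (int x - int (j*(k-s)) - 1) mod int (m*(k-s)) < int k"
proof -
  define n where "n = m*(k-s)"
  have n: "n > 0" using assms n_def by simp
  show ?thesis unfolding n_def[symmetric] scycle_edge_def
  proof
    assume "x \<in> (\<lambda>i. (j * (k - s) + i) mod n) ` {1..k}"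
    then obtain i where i: "i \<in> {1..k}" "x = (j*(k-s)+i) mod n" by auto
    have "x < n" using i n by simp
    moreover have "(int x - int (j*(k-s)) - 1) mod int n = (int i - 1) mod int n"
    proof -
      have "int x = (int (j*(k-s)) + int i) mod int n" using i(2) by (simp add: zmod_int)
      hence "(int x - int (j*(k-s)) - 1) mod int n = ((int (j*(k-s)) + int i) mod int n - (int (j*(k-s)) + 1)) mod int n"
        by (simp add: algebra_simps)
      also have "\<dots> = ((int (j*(k-s)) + int i) - (int (j*(k-s)) + 1)) mod int n"
        by (rule mod_diff_left_eq)
      finally show ?thesis by simp
    qed
    moreover have "(int i - 1) mod int n \<le> int i - 1" using i n
      by (intro zmod_le_nonneg_dividend) auto
    ultimately show "x < n \<and> (int x - int (j*(k-s)) - 1) mod int n < int k" using i by auto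
  next
    assume h: "x < n \<and> (int x - int (j*(k-s)) - 1) mod int n < int k"
    define oo where "oo = (int x - int (j*(k-s)) - 1) mod int n"
    have o0: "oo \<ge> 0" using n oo_def by simp
    define i where "i = nat oo + 1"
    have "oo < int k" using h oo_def by simp
    hence "i \<in> {1..k}" using o0 unfolding i_def by auto
    moreover have "x = (j*(k-s)+i) mod n"
    proof -
      have "int ((j*(k-s)+i) mod n) = (int (j*(k-s)) + oo + 1) mod int n"
        using o0 by (simp add: i_def zmod_int algebra_simps)
      also have "\<dots> = (int (j*(k-s)) + (int x - int (j*(k-s)) - 1) + 1) mod int n"
        unfolding oo_def by (metis mod_add_left_eq mod_add_right_eq)
      also have "\<dots> = int x" using h by simp
      finally show ?thesis by linarith
    qed
    ultimately show "x \<in> (\<lambda>i. (j * (k - s) + i) mod n) ` {1..k}" by auto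
  qed
qed

lemma modeq:
  fixes j j' m d :: nat
  assumes "j < m" "j' < m" "d > 0" "int (m*d) dvd (int (j*d) - int (j'*d))"
  shows "j = j'"
proof -
  have "int m * int d dvd (int j - int j') * int d" using assms(4) by (simp add: algebra_simps)
  hence "int m dvd (int j - int j')" using assms(3) by (simp add: mult_dvd_mono)
  then obtain t where t: "int j - int j' = int m * t" by (auto simp: dvd_def)
  show ?thesis
  proof (cases "t = 0")
    case True then show ?thesis using t by simp
  next
    case False
    hence "\<bar>t\<bar> \<ge> 1" by linarith
    hence "int m * \<bar>t\<bar> \<ge> int m * 1" by (intro mult_left_mono) auto
    hence "\<bar>int m * t\<bar> \<ge> int m" by (simp add: abs_mult)
    then show ?thesis using t assms(1,2) by linarith
  qed
qed

lemma edge_inj: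
  assumes "d = k - s" "0 < d" "k < m * d"
  shows "inj_on (scycle_edge k s m) {..<m}"
proof
  fix j j' assume j: "j \<in> {..<m}" and j': "j' \<in> {..<m}"
    and eq: "scycle_edge k s m j = scycle_edge k s m j'"
  define N where "N = int (m*d)"
  have kpos: "0 < k" using assms(1,2) by simp
  have "0 < m*d" using assms(3) by linarith
  hence pos: "0 < m*(k-s)" using assms(1) by simp
  have Npos: "N > int k" using assms(3) N_def by (metis of_nat_less_iff)
  have mem: "\<And>x j. x \<in> scycle_edge k s m j \<longleftrightarrow> x < m*d \<and> (int x - int(j*d) - 1) mod N < int k"
    using mem_edge[OF pos] assms(1) N_def by simp
  define x where "x = (j*d+1) mod (m*d)"
  define y where "y = (j*d) mod (m*d)"
  have xN: "x < m*d" "y < m*d" using \<open>0 < m*d\<close> x_def y_def by auto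
  have ix: "int x = (int (j*d) + 1) mod N" unfolding x_def N_def by (simp add: zmod_int add.commute)
  have iy: "int y = (int (j*d)) mod N" unfolding y_def N_def by (simp add: zmod_int)
  have "(int x - int (j*d) - 1) mod N = ((int (j*d) + 1) mod N - (int (j*d) + 1)) mod N"
    using ix by (simp add: algebra_simps)
  also have "\<dots> = 0" by (simp add: mod_diff_left_eq)
  finally have "x \<in> scycle_edge k s m j" using mem[of x j] xN kpos by simp
  hence xin: "(int x - int (j'*d) - 1) mod N < int k"
    using eq mem[of x j'] by simp
  have "(int y - int (j*d) - 1) mod N = ((int (j*d)) mod N - (int (j*d) + 1)) mod N"
    using iy by (simp add: algebra_simps)
  also have "\<dots> = (-1) mod N" by (simp add: mod_diff_left_eq)
  also have "\<dots> = N - 1" using Npos by (simp add: zmod_minus1)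
  finally have "y \<notin> scycle_edge k s m j" using mem[of y j] Npos by simp
  hence yout: "(int y - int (j'*d) - 1) mod N \<ge> int k"
    using eq mem[of y j'] xN by simp
  define o' where "o' = (int x - int (j'*d) - 1) mod N"
  have o'0: "o' \<ge> 0" using o'_def Npos by simp
  have "(int y - int (j'*d) - 1) mod N = (int x - int (j'*d) - 1 - 1) mod N"
  proof -
    have "(int x - 1) mod N = ((int (j*d) + 1) mod N - 1) mod N" by (simp only: ix)
    also have "\<dots> = (int (j*d) + 1 - 1) mod N" by (rule mod_diff_left_eq)
    also have "\<dots> = int y mod N" using iy by simp
    finally have "int y mod N = (int x - 1) mod N" by simp
    hence "(int y - (int (j'*d) + 1)) mod N = ((int x - 1) - (int (j'*d) + 1)) mod N"
      by (rule mod_diff_cong) simp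
    thus ?thesis by (simp add: algebra_simps)
  qed
  also have "\<dots> = (o' - 1) mod N" unfolding o'_def by (rule mod_diff_left_eq[symmetric])
  finally have yo: "(int y - int (j'*d) - 1) mod N = (o' - 1) mod N" .
  have "o' = 0"
  proof (rule ccontr)
    assume "o' \<noteq> 0"
    moreover have "o' < int k" using xin o'_def by simp
    ultimately have "(o' - 1) mod N = o' - 1" using o'0 Npos by (intro mod_pos_pos_trivial) auto
    thus False using yo yout xin o'_def by simp
  qed
  hence "N dvd (int x - int (j'*d) - 1)" using o'_def by (simp add: mod_0_imp_dvd)
  moreover have "N dvd (int x - (int (j*d) + 1))"
    using ix by (metis mod_mod_trivial mod_eq_dvd_iff)
  ultimately have "N dvd ((int x - (int (j*d) + 1)) - (int x - int (j'*d) - 1))" by (metis dvd_diff)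
  hence "N dvd (int (j'*d) - int (j*d))" by (simp add: algebra_simps)
  thus "j = j'" using modeq[of j' m j d] j j' assms N_def by simp
qed

lemma deg_eq:
  assumes "d = k - s" "0 < d" "k < m * d"
  shows "scycle_degree k s m v = card {j\<in>{..<m}. v \<in> scycle_edge k s m j}"
proof -
  have "{e \<in> scycle_edges k s m. v \<in> e} = scycle_edge k s m ` {j\<in>{..<m}. v \<in> scycle_edge k s m j}"
    unfolding scycle_edges_def by auto
  moreover have "inj_on (scycle_edge k s m) {j\<in>{..<m}. v \<in> scycle_edge k s m j}"
    using edge_inj[OF assms] by (rule inj_on_subset) auto
  ultimately show ?thesis unfolding scycle_degree_def by (simp add: card_image)
qed

lemma card_edge:
  assumes "d = k - s" "0 < d" "k < m * d"
  shows "card (scycle_edge k s m j) = k"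
proof -
  define N where "N = int (m*d)"
  have "inj_on (\<lambda>i. (j * (k - s) + i) mod (m * (k - s))) {1..k}"
  proof
    fix i i' assume i: "i \<in> {1..k}" and i': "i' \<in> {1..k}"
      and eq: "(j * (k - s) + i) mod (m * (k - s)) = (j * (k - s) + i') mod (m * (k - s))"
    have "int ((j*d + i) mod (m*d)) = int ((j*d + i') mod (m*d))" using eq assms(1) by simp
    hence "(int (j*d) + int i) mod N = (int (j*d) + int i') mod N" unfolding N_def by (simp add: zmod_int)
    hence "N dvd ((int (j*d) + int i) - (int (j*d) + int i'))" by (simp add: mod_eq_dvd_iff)
    hence "N dvd (int i - int i')" by simp
    then obtain t where t: "int i - int i' = N * t" by (auto simp: dvd_def)
    show "i = i'"
    proof (cases "t = 0")
      case True then show ?thesis using t by simp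
    next
      case False
      hence "\<bar>t\<bar> \<ge> 1" by linarith
      moreover have "N \<ge> 0" using N_def by simp
      ultimately have "N * \<bar>t\<bar> \<ge> N * 1" by (intro mult_left_mono) auto
      hence "\<bar>N * t\<bar> \<ge> N" using \<open>N \<ge> 0\<close> by (simp add: abs_mult)
      moreover have "N > int k" using assms(3) N_def by (metis of_nat_less_iff)
      ultimately show ?thesis using t i i' by auto
    qed
  qed
  thus ?thesis unfolding scycle_edge_def by (simp add: card_image)
qed

lemma edge_sub:
  assumes "d = k - s" "0 < m*d"
  shows "scycle_edge k s m j \<subseteq> {..<m*d}"
proof
  fix x assume "x \<in> scycle_edge k s m j"
  then obtain i where "x = (j*(k-s)+i) mod (m*(k-s))" unfolding scycle_edge_def by auto
  hence "x = (j*d+i) mod (m*d)" using assms(1) by simp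
  thus "x \<in> {..<m*d}" using assms(2) by simp
qed

lemma card_filter_sum: "finite A \<Longrightarrow> card {x\<in>A. P x} = (\<Sum>x\<in>A. if P x then 1 else 0 :: nat)"
  by (simp add: sum.If_cases Int_def)

lemma deg_sum:
  assumes "d = k - s" "0 < d" "k < m * d"
  shows "(\<Sum>v<m*d. card {j\<in>{..<m}. v \<in> scycle_edge k s m j}) = m * k"
proof -
  have "(\<Sum>v<m*d. card {j\<in>{..<m}. v \<in> scycle_edge k s m j})
      = (\<Sum>v<m*d. \<Sum>j<m. if v \<in> scycle_edge k s m j then 1 else 0)"
    by (intro sum.cong refl) (rule card_filter_sum, simp)
  also have "\<dots> = (\<Sum>j<m. \<Sum>v<m*d. if v \<in> scycle_edge k s m j then 1 else 0)"
    by (rule sum.swap)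
  also have "\<dots> = (\<Sum>j<m. card {v\<in>{..<m*d}. v \<in> scycle_edge k s m j})"
    by (intro sum.cong refl) (rule card_filter_sum[symmetric], simp)
  also have "\<dots> = (\<Sum>j<m. k)"
  proof (intro sum.cong refl)
    fix j
    have "0 < m*d" using assms(3) by linarith
    hence "{v\<in>{..<m*d}. v \<in> scycle_edge k s m j} = scycle_edge k s m j"
      using edge_sub[OF assms(1), of m j] by blast
    thus "card {v\<in>{..<m*d}. v \<in> scycle_edge k s m j} = k" using card_edge[OF assms] by simp
  qed
  finally show ?thesis by simp
qed

lemma deg_le:
  assumes "d = k - s" "0 < d" "k < m * d" "k = q * d" "v < m * d"
  shows "card {j\<in>{..<m}. v \<in> scycle_edge k s m j} \<le> q"
proof -
  define N where "N = int (m*d)"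
  have "0 < m*d" using assms(3) by linarith
  hence pos: "0 < m*(k-s)" using assms(1) by simp
  have Npos: "N > int k" using assms(3) N_def by (metis of_nat_less_iff)
  have mem: "\<And>x j. x \<in> scycle_edge k s m j \<longleftrightarrow> x < m*d \<and> (int x - int(j*d) - 1) mod N < int k"
    using mem_edge[OF pos] assms(1) N_def by simp
  define A where "A = {j\<in>{..<m}. v \<in> scycle_edge k s m j}"
  define oo where "oo j = (int v - int(j*d) - 1) mod N" for j
  define h where "h j = oo j div int d" for j
  have dN: "int d dvd N" unfolding N_def by simp
  have oomod: "oo j mod int d = (int v - 1) mod int d" for j
  proof -
    have "oo j mod int d = (int v - 1 - int (j*d)) mod int d"
      unfolding oo_def using mod_mod_cancel[OF dN] by (simp add: algebra_simps)
    also have "\<dots> = (int v - 1 - int (j*d) mod int d) mod int d" by (rule mod_diff_right_eq[symmetric])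
    also have "\<dots> = (int v - 1) mod int d" by simp
    finally show ?thesis .
  qed
  have oo0: "0 \<le> oo j" for j unfolding oo_def using Npos by simp
  have "h ` A \<subseteq> {0..<int q}"
  proof
    fix y assume "y \<in> h ` A"
    then obtain j where j: "j \<in> A" "y = h j" by auto
    have lt: "oo j < int q * int d" using j(1) mem[of v j] assms(4) unfolding A_def oo_def by simp
    have le: "int d * (oo j div int d) \<le> oo j"
    proof -
      have "0 \<le> oo j mod int d" using assms(2) by simp
      moreover have "int d * (oo j div int d) + oo j mod int d = oo j"
        using div_mult_mod_eq[of "oo j" "int d"] by (simp only: mult.commute)
      ultimately show ?thesis by linarith
    qed
    have "oo j div int d < int q"
    proof (rule ccontr)
      assume "\<not> oo j div int d < int q"
      hence "int d * int q \<le> int d * (oo j div int d)" by (intro mult_left_mono) auto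
      thus False using le lt by (simp add: algebra_simps)
    qed
    moreover have "0 \<le> oo j div int d" using oo0[of j] assms(2) by (simp add: pos_imp_zdiv_nonneg_iff)
    ultimately show "y \<in> {0..<int q}" using j(2) h_def by simp
  qed
  moreover have "inj_on h A"
  proof
    fix j j' assume j: "j \<in> A" and j': "j' \<in> A" and eq: "h j = h j'"
    have "oo j = oo j'"
      using div_mult_mod_eq[of "oo j" "int d"] div_mult_mod_eq[of "oo j'" "int d"] eq oomod
      unfolding h_def by metis
    hence "N dvd ((int v - int(j*d) - 1) - (int v - int(j'*d) - 1))"
      unfolding oo_def by (simp add: mod_eq_dvd_iff)
    hence "N dvd (int (j'*d) - int (j*d))" by (simp add: algebra_simps)
    thus "j = j'" using modeq[of j' m j d] j j' assms(2) N_def unfolding A_def by simp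
  qed
  ultimately have "card A \<le> card {0..<int q}" by (intro card_inj_on_le) auto
  thus ?thesis unfolding A_def by simp
qed

theorem proposition3p1:
  fixes k s m :: nat
  assumes "k \<ge> 3" and "1 \<le> s" and "s \<le> k - 1" and "m \<ge> 1"
    and "m * (k - s) \<ge> 2 * k - s"
  shows "(scycle_regular k s m \<longleftrightarrow> (\<exists>q::nat. q > 0 \<and> k = q * (k - s)))
       \<and> (\<forall>q::nat. q > 0 \<and> k = q * (k - s) \<longrightarrow>
            (\<forall>v \<in> scycle_vertices k s m. scycle_degree k s m v = q))"
proof -
  define d where "d = k - s"
  have d0: "0 < d" using assms d_def by simp
  have kd: "k < m * d" using assms d_def by simp
  define c where "c v = card {j\<in>{..<m}. v \<in> scycle_edge k s m j}" for v
  have deg: "scycle_degree k s m v = c v" for v using deg_eq[OF d_def d0 kd] c_def by simp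
  have sum: "(\<Sum>v<m*d. c v) = m * k" using deg_sum[OF d_def d0 kd] c_def by simp
  have V: "scycle_vertices k s m = {..<m*d}" unfolding scycle_vertices_def d_def by simp
  have B: "\<forall>v \<in> scycle_vertices k s m. scycle_degree k s m v = q" if q: "q > 0" "k = q * d" for q
  proof -
    have le: "c v \<le> q" if "v < m*d" for v using deg_le[OF d_def d0 kd q(2) that] c_def by simp
    have "(\<Sum>v<m*d. q - c v) = (\<Sum>v<m*d. q) - (\<Sum>v<m*d. c v)"
      using le by (intro sum_subtractf_nat) auto
    also have "\<dots> = 0" unfolding sum using q(2) by (simp add: algebra_simps)
    finally have z: "\<forall>v\<in>{..<m*d}. q - c v = 0" by (simp only: sum_eq_0_iff finite_lessThan)
    show ?thesis
    proof
      fix v assume "v \<in> scycle_vertices k s m"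
      hence v: "v < m*d" using V by simp
      have "c v = q" using z le[OF v] v by (metis lessThan_iff diff_is_0_eq le_antisym)
      thus "scycle_degree k s m v = q" using deg by simp
    qed
  qed
  have A: "scycle_regular k s m \<longleftrightarrow> (\<exists>q::nat. q > 0 \<and> k = q * d)"
  proof
    assume reg: "scycle_regular k s m"
    have n0: "0 < m*d" using kd by linarith
    have cc: "c v = c 0" if "v < m*d" for v
    proof -
      have "v \<in> scycle_vertices k s m" "0 \<in> scycle_vertices k s m" using that n0 V by auto
      hence "scycle_degree k s m v = scycle_degree k s m 0"
        using reg unfolding scycle_regular_def by blast
      thus ?thesis using deg by metis
    qed
    have "(\<Sum>v<m*d. c v) = (\<Sum>v<m*d. c 0)" by (rule sum.cong) (auto intro: cc)
    moreover have "(\<Sum>v<m*d. c 0) = m * (d * c 0)" by simp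
    ultimately have "m * k = m * (d * c 0)" using sum by linarith
    hence "k = d * c 0" using assms(4) by simp
    hence "k = c 0 * d" by (simp only: mult.commute)
    moreover have "c 0 > 0" using \<open>k = c 0 * d\<close> assms(1) by (cases "c 0") auto
    ultimately show "\<exists>q::nat. q > 0 \<and> k = q * d" by blast
  next
    assume "\<exists>q::nat. q > 0 \<and> k = q * d"
    then obtain q where "q > 0" "k = q * d" by blast
    thus "scycle_regular k s m" using B unfolding scycle_regular_def by metis
  qed
  show ?thesis using A B d_def by auto
qed

end
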